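(* Let $h>0$ and let $(\tau,\mu):\mathbb R\to\mathbb R^2$ be any solution of the system $\tau'=1+K(\tau,\mu)\mu$, $\mu'=-K(\tau,\mu)\tau$. Then $$\lim_{s\to+\infty}\tau(s)=+\infty,\quad \lim_{s\to-\infty}\tau(s)=-\infty,\quad \lim_{s\to+\infty}\mu(s)=-\infty,\quad \lim_{s\to-\infty}\mu(s)=+\infty.$$
   Context: Fix $h>0$. For $(\tau,\mu)\in\mathbb R^2$ put $r^2=\tau^2+\mu^2$ and define $K:\mathbb R^2\to\mathbb R$ by $$K(\tau,\mu)=\frac{2\big(\tau^2+h^2(1+\mu^2)\big)\tau+(h^2-1)(1+\mu^2)\mu}{(1+r^2)(h^2+r^2)}.$$ Consider the autonomous ODE system $\tau'=1+K(\tau,\mu)\mu$, $\mu'=-K(\tau,\mu)\tau$ for functions $s\mapsto(\tau(s),\mu(s))$; all its solutions are defined on $\mathbb R$. *)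

theory Defs
  imports "HOL-Analysis.Analysis"
begin

definition Kfun :: "real \<Rightarrow> real \<Rightarrow> real \<Rightarrow> real" where
  "Kfun h \<tau> \<mu> =
     (2 * (\<tau>\<^sup>2 + h\<^sup>2 * (1 + \<mu>\<^sup>2)) * \<tau> + (h\<^sup>2 - 1) * (1 + \<mu>\<^sup>2) * \<mu>)
     / ((1 + (\<tau>\<^sup>2 + \<mu>\<^sup>2)) * (h\<^sup>2 + (\<tau>\<^sup>2 + \<mu>\<^sup>2)))"

end

theory Submission
  imports Defs
begin


lemma Kfun_eq: "Kfun h t m = (2 * (t\<^sup>2 + h\<^sup>2 * (1 + m\<^sup>2)) * t + (h\<^sup>2 - 1) * (1 + m\<^sup>2) * m)
     / ((1 + (t\<^sup>2 + m\<^sup>2)) * (h\<^sup>2 + (t\<^sup>2 + m\<^sup>2)))" by (simp add: Kfun_def)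

lemma D_pos: "h > 0 \<Longrightarrow> (1 + (t\<^sup>2 + m\<^sup>2)) * (h\<^sup>2 + ((t::real)\<^sup>2 + m\<^sup>2)) > 0"
  by (intro mult_pos_pos) (auto intro: add_pos_nonneg)

lemma E_id:
  assumes h: "h > 0"
  shows "Kfun h t m * (t\<^sup>2 + m\<^sup>2) + m =
    ((t\<^sup>2 + m\<^sup>2) * (2*t+m) * (t\<^sup>2 + h\<^sup>2*m\<^sup>2) + 2*h\<^sup>2*(t\<^sup>2 + m\<^sup>2)*(t+m) + h\<^sup>2*m)
    / ((1 + (t\<^sup>2 + m\<^sup>2)) * (h\<^sup>2 + (t\<^sup>2 + m\<^sup>2)))"
proof -
  have "(1 + (t\<^sup>2 + m\<^sup>2)) * (h\<^sup>2 + (t\<^sup>2 + m\<^sup>2)) \<noteq> 0" using D_pos[OF h, of t m] by linarith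
  then show ?thesis unfolding Kfun_def
    by (simp add: field_simps power2_eq_square)
qed

lemma P_id:
  assumes h: "h > 0"
  shows "1 + Kfun h t m * m =
    (h\<^sup>2*(1+m\<^sup>2)\<^sup>2 + t\<^sup>2*(h\<^sup>2+m\<^sup>2) + t\<^sup>2*(1+m\<^sup>2) + t^4 + 2*(t\<^sup>2+h\<^sup>2*(1+m\<^sup>2))*t*m)
    / ((1 + (t\<^sup>2 + m\<^sup>2)) * (h\<^sup>2 + (t\<^sup>2 + m\<^sup>2)))"
proof -
  have "(1 + (t\<^sup>2 + m\<^sup>2)) * (h\<^sup>2 + (t\<^sup>2 + m\<^sup>2)) \<noteq> 0" using D_pos[OF h, of t m] by linarith
  then show ?thesis unfolding Kfun_def
    by (simp add: field_simps power2_eq_square eval_nat_numeral) 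
qed

lemma KA:
  assumes h: "h > 0" and t: "\<bar>t\<bar> \<le> h\<^sup>2/(2*(1+h\<^sup>2))"
  shows "1 + Kfun h t m * m \<ge> h\<^sup>2/(4*(1+h\<^sup>2))"
proof -
  define X where "X = 1 + m\<^sup>2"
  define d where "d = h\<^sup>2/(2*(1+h\<^sup>2))"
  define D where "D = (1 + (t\<^sup>2 + m\<^sup>2)) * (h\<^sup>2 + (t\<^sup>2 + m\<^sup>2))"
  define P where "P = h\<^sup>2*(1+m\<^sup>2)\<^sup>2 + t\<^sup>2*(h\<^sup>2+m\<^sup>2) + t\<^sup>2*(1+m\<^sup>2) + t^4 + 2*(t\<^sup>2+h\<^sup>2*(1+m\<^sup>2))*t*m"
  have hp: "h\<^sup>2 > 0" using h by simp
  have X1: "X \<ge> 1" unfolding X_def by simp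
  have d0: "d \<ge> 0" unfolding d_def by simp
  have nz: "1+h\<^sup>2 > 0" by (simp add: add_pos_nonneg)
  have d1: "d \<le> 1/2" unfolding d_def using nz by (simp add: divide_simps)
  have tt: "t\<^sup>2 \<le> 1"
  proof -
    have "\<bar>t\<bar> \<le> 1" using t d1 unfolding d_def by linarith
    then show ?thesis using power_mono[of "\<bar>t\<bar>" 1 2] by simp
  qed
  have m2: "2*\<bar>m\<bar> \<le> X" unfolding X_def
    using sum_squares_ge_zero[of "\<bar>m\<bar> - 1" 0] by (simp add: power2_eq_square algebra_simps)
  have A1: "t\<^sup>2+h\<^sup>2*X \<le> (1+h\<^sup>2)*X" using tt X1 by (simp add: algebra_simps)
  have A0: "t\<^sup>2+h\<^sup>2*X \<ge> 0" using X1 by simp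
  have "\<bar>2*(t\<^sup>2+h\<^sup>2*X)*t*m\<bar> = (t\<^sup>2+h\<^sup>2*X) * \<bar>t\<bar> * (2*\<bar>m\<bar>)"
    using A0 by (simp add: abs_mult)
  also have "\<dots> \<le> ((1+h\<^sup>2)*X) * d * X"
    apply (intro mult_mono) using A1 A0 t m2 X1 d0 unfolding d_def by auto
  also have "\<dots> = (h\<^sup>2/2) * X\<^sup>2" unfolding d_def using nz by (simp add: field_simps power2_eq_square)
  finally have B: "\<bar>2*(t\<^sup>2+h\<^sup>2*X)*t*m\<bar> \<le> (h\<^sup>2/2) * X\<^sup>2" .
  have "P \<ge> h\<^sup>2*X\<^sup>2 + 2*(t\<^sup>2+h\<^sup>2*X)*t*m" unfolding P_def X_def
    by (simp add: add_nonneg_nonneg)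
  then have Pge: "P \<ge> (h\<^sup>2/2) * X\<^sup>2" using B by linarith
  have D1: "1 + (t\<^sup>2 + m\<^sup>2) \<le> 2*X" unfolding X_def using tt by (smt (verit) zero_le_power2)
  have D2: "h\<^sup>2 + (t\<^sup>2 + m\<^sup>2) \<le> (1+h\<^sup>2)*X"
  proof -
    have e: "(1+h\<^sup>2)*X = 1 + m\<^sup>2 + h\<^sup>2 + h\<^sup>2*m\<^sup>2" unfolding X_def by (simp add: algebra_simps)
    have "h\<^sup>2*m\<^sup>2 \<ge> 0" by simp
    then show ?thesis using e tt by linarith
  qed
  have "D \<le> (2*X) * ((1+h\<^sup>2)*X)" unfolding D_def
    by (intro mult_mono D1 D2) (use X1 in \<open>auto intro: add_nonneg_nonneg\<close>)
  then have Dle: "D \<le> 2*(1+h\<^sup>2)*X\<^sup>2" by (simp add: power2_eq_square algebra_simps)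
  have Dp: "D > 0" unfolding D_def using D_pos[OF h] by simp
  have "h\<^sup>2/(4*(1+h\<^sup>2)) = ((h\<^sup>2/2) * X\<^sup>2) / (2*(1+h\<^sup>2)*X\<^sup>2)"
  proof -
    have "X\<^sup>2 \<noteq> 0" using X1 by auto
    then have "((h\<^sup>2/2) * X\<^sup>2) / (2*(1+h\<^sup>2)*X\<^sup>2) = (h\<^sup>2/2) / (2*(1+h\<^sup>2))"
      by (rule nonzero_mult_divide_mult_cancel_right)
    then show ?thesis by simp
  qed
  also have "\<dots> \<le> P / D"
  proof (rule frac_le)
    have "(h\<^sup>2/2) * X\<^sup>2 \<ge> 0" by simp
    then show "0 \<le> P" using Pge by linarith
  qed (use Pge Dp Dle in auto)
  also have "\<dots> = 1 + Kfun h t m * m" unfolding P_def D_def using P_id[OF h] by simp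
  finally show ?thesis .
qed
lemma KB:
  assumes h: "h > 0" and t: "t > 0" and m: "m > 0"
  shows "Kfun h t m * (t\<^sup>2 + m\<^sup>2) + m > 0"
proof -
  have a: "(t\<^sup>2 + m\<^sup>2) * (2*t+m) * (t\<^sup>2 + h\<^sup>2*m\<^sup>2) > 0"
    using t m h by (intro mult_pos_pos) (auto intro: add_pos_nonneg)
  have b: "2*h\<^sup>2*(t\<^sup>2 + m\<^sup>2)*(t+m) \<ge> 0" using t m by simp
  have c: "h\<^sup>2*m > 0" using h m by simp
  have "(t\<^sup>2 + m\<^sup>2) * (2*t+m) * (t\<^sup>2 + h\<^sup>2*m\<^sup>2) + 2*h\<^sup>2*(t\<^sup>2 + m\<^sup>2)*(t+m) + h\<^sup>2*m > 0"
    using a b c by linarith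
  then show ?thesis unfolding E_id[OF h] using D_pos[OF h, of t m]
    by (intro divide_pos_pos)
qed

lemma KC:
  assumes h: "h > 0" and t: "t > 0" and m: "m < -2*t"
  shows "Kfun h t m * (t\<^sup>2 + m\<^sup>2) + m < 0"
proof -
  have r: "t\<^sup>2 + m\<^sup>2 > 0" using t by (simp add: add_pos_nonneg)
  have q: "t\<^sup>2 + h\<^sup>2*m\<^sup>2 > 0" using t by (simp add: add_pos_nonneg)
  have a: "(t\<^sup>2 + m\<^sup>2) * (2*t+m) * (t\<^sup>2 + h\<^sup>2*m\<^sup>2) < 0"
  proof -
    have "(t\<^sup>2 + m\<^sup>2) * (2*t+m) < 0" using r m by (simp add: mult_pos_neg)
    then show ?thesis using q by (simp add: mult_neg_pos)
  qed
  have b: "2*h\<^sup>2*(t\<^sup>2 + m\<^sup>2)*(t+m) \<le> 0" using t m r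
    by (intro mult_nonneg_nonpos) auto
  have c: "h\<^sup>2*m < 0" using h m t by (simp add: mult_pos_neg)
  have "(t\<^sup>2 + m\<^sup>2) * (2*t+m) * (t\<^sup>2 + h\<^sup>2*m\<^sup>2) + 2*h\<^sup>2*(t\<^sup>2 + m\<^sup>2)*(t+m) + h\<^sup>2*m < 0"
    using a b c by linarith
  then show ?thesis unfolding E_id[OF h] using D_pos[OF h, of t m]
    by (intro divide_neg_pos)
qed

lemma KD:
  assumes h: "h > 0" and V: "V \<ge> 1" and t: "t \<ge> 1" and t4: "t^4 \<ge> 2*h\<^sup>2"
    and m1: "-t \<le> m" and m2: "m \<le> V*t"
  shows "Kfun h t m * (t\<^sup>2 + m\<^sup>2) + m \<ge> t/(4*(1+h\<^sup>2)*(1+V\<^sup>2)\<^sup>2)"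
proof -
  define R where "R = t\<^sup>2 + m\<^sup>2"
  define Num where "Num = R * (2*t+m) * (t\<^sup>2 + h\<^sup>2*m\<^sup>2) + 2*h\<^sup>2*R*(t+m) + h\<^sup>2*m"
  define D where "D = (1 + R) * (h\<^sup>2 + R)"
  have t0: "t > 0" using t by simp
  have Rt: "R \<ge> t\<^sup>2" unfolding R_def by simp
  have t21: "t\<^sup>2 \<ge> 1" using t by (simp add: one_le_power)
  have R1: "R \<ge> 1" using Rt t21 by linarith
  have f1: "R * (2*t+m) * (t\<^sup>2 + h\<^sup>2*m\<^sup>2) \<ge> t\<^sup>2 * t * t\<^sup>2"
  proof (rule mult_mono)
    show "t\<^sup>2 * t \<le> R * (2*t+m)" using Rt m1 t0 R1 by (intro mult_mono) auto
    show "t\<^sup>2 \<le> t\<^sup>2 + h\<^sup>2*m\<^sup>2" by simp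
    show "0 \<le> R * (2*t+m)" using R1 m1 t0 by simp
  qed simp
  have f2: "2*h\<^sup>2*R*(t+m) \<ge> 0" using m1 R1 by simp
  have f3: "h\<^sup>2*m \<ge> - (h\<^sup>2*t)" using mult_left_mono[OF m1, of "h\<^sup>2"] by simp
  have "t\<^sup>2 * t * t\<^sup>2 = t * t^4" by (simp add: power2_eq_square eval_nat_numeral)
  then have "Num \<ge> t * t^4 - h\<^sup>2*t" unfolding Num_def using f1 f2 f3 by linarith
  moreover have "t * t^4 - h\<^sup>2*t \<ge> t * t^4 / 2"
  proof -
    have "t * (t^4/2) \<ge> t * h\<^sup>2" using t4 t0 by (intro mult_left_mono) auto
    then show ?thesis by (simp add: algebra_simps)
  qed
  ultimately have Nge: "Num \<ge> t * t^4 / 2" by linarith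
  have mV: "m\<^sup>2 \<le> (V*t)\<^sup>2"
  proof -
    have "1*t \<le> V*t" using V t0 by (intro mult_right_mono) auto
    then have "\<bar>m\<bar> \<le> V*t" using m1 m2 by linarith
    then have "\<bar>m\<bar>^2 \<le> (V*t)^2" by (intro power_mono) auto
    then show ?thesis by simp
  qed
  have RV: "R \<le> (1+V\<^sup>2)*t\<^sup>2"
  proof -
    have "(V*t)\<^sup>2 = V\<^sup>2*t\<^sup>2" by (rule power_mult_distrib)
    moreover have "(1+V\<^sup>2)*t\<^sup>2 = t\<^sup>2 + V\<^sup>2*t\<^sup>2" by (simp add: algebra_simps)
    ultimately show ?thesis unfolding R_def using mV by linarith
  qed
  have "D \<le> (2*R) * ((1+h\<^sup>2)*R)" unfolding D_def
  proof (rule mult_mono)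
    show "1 + R \<le> 2*R" using R1 by simp
    have "h\<^sup>2 \<le> h\<^sup>2*R" using R1 by (simp add: mult_le_cancel_left1)
    then show "h\<^sup>2 + R \<le> (1+h\<^sup>2)*R" by (simp add: algebra_simps)
    show "0 \<le> 2*R" using R1 by simp
    show "0 \<le> h\<^sup>2 + R" using R1 by (simp add: add_nonneg_nonneg)
  qed
  also have "\<dots> = 2*(1+h\<^sup>2) * (R*R)" by simp
  also have "\<dots> \<le> 2*(1+h\<^sup>2) * (((1+V\<^sup>2)*t\<^sup>2)*((1+V\<^sup>2)*t\<^sup>2))"
  proof (rule mult_left_mono)
    show "R*R \<le> ((1+V\<^sup>2)*t\<^sup>2)*((1+V\<^sup>2)*t\<^sup>2)" using RV R1 by (intro mult_mono) auto
    show "0 \<le> 2*(1+h\<^sup>2)" by (simp add: add_nonneg_nonneg)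
  qed
  also have "\<dots> = 2*(1+h\<^sup>2)*(1+V\<^sup>2)\<^sup>2 * t^4" by (simp add: power2_eq_square eval_nat_numeral)
  finally have Dle: "D \<le> 2*(1+h\<^sup>2)*(1+V\<^sup>2)\<^sup>2 * t^4" .
  have Dp: "D > 0" unfolding D_def R_def using D_pos[OF h] by simp
  have nz: "(1+h\<^sup>2) > 0" "(1+V\<^sup>2) > 0" by (auto intro: add_pos_nonneg)
  have "t/(4*(1+h\<^sup>2)*(1+V\<^sup>2)\<^sup>2) = (t * t^4 / 2) / (2*(1+h\<^sup>2)*(1+V\<^sup>2)\<^sup>2 * t^4)"
  proof -
    have "t^4 \<noteq> 0" using t0 by simp
    then have "(t * t^4 / 2) / (2*(1+h\<^sup>2)*(1+V\<^sup>2)\<^sup>2 * t^4) = (t/2) / (2*(1+h\<^sup>2)*(1+V\<^sup>2)\<^sup>2)"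
      using nonzero_mult_divide_mult_cancel_right[of "t^4" "t/2" "2*(1+h\<^sup>2)*(1+V\<^sup>2)\<^sup>2"]
      by (simp add: mult.commute mult.left_commute)
    then show ?thesis by simp
  qed
  also have "\<dots> \<le> Num / D"
  proof (rule frac_le)
    have "t * t^4 / 2 \<ge> 0" using t0 by simp
    then show "0 \<le> Num" using Nge by linarith
  qed (use Nge Dp Dle in auto)
  also have "\<dots> = Kfun h t m * (t\<^sup>2 + m\<^sup>2) + m" unfolding E_id[OF h] Num_def D_def R_def by simp
  finally show ?thesis .
qed

lemma KE:
  assumes h: "h > 0"
  shows "\<bar>Kfun h t m * m\<bar> \<le> 2 + 2*h\<^sup>2 + \<bar>h\<^sup>2 - 1\<bar>"
proof -
  define R where "R = t\<^sup>2 + m\<^sup>2"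
  define B where "B = 2 + 2*h\<^sup>2 + \<bar>h\<^sup>2 - 1\<bar>"
  define N where "N = 2 * (t\<^sup>2 + h\<^sup>2 * (1 + m\<^sup>2)) * t + (h\<^sup>2 - 1) * (1 + m\<^sup>2) * m"
  define D where "D = (1 + R) * (h\<^sup>2 + R)"
  have Dp: "D > 0" unfolding D_def R_def using D_pos[OF h] by simp
  have R0: "R \<ge> 0" unfolding R_def by simp
  have tm2: "2*(\<bar>t\<bar>*\<bar>m\<bar>) \<le> R" unfolding R_def
    using sum_squares_ge_zero[of "\<bar>t\<bar> - \<bar>m\<bar>" 0] by (simp add: power2_eq_square algebra_simps)
  have tm: "\<bar>t\<bar>*\<bar>m\<bar> \<le> R" using tm2 abs_ge_zero[of t] abs_ge_zero[of m]
    by (smt (verit) mult_nonneg_nonneg)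
  have g1: "t\<^sup>2 + h\<^sup>2 * (1 + m\<^sup>2) \<le> (1+h\<^sup>2)*(1+R)" unfolding R_def
    by (simp add: algebra_simps)
  have g10: "t\<^sup>2 + h\<^sup>2 * (1 + m\<^sup>2) \<ge> 0" by (simp add: add_nonneg_nonneg)
  define g where "g = t\<^sup>2 + h\<^sup>2 * (1 + m\<^sup>2)"
  have Nm: "N*m = 2*g*t*m + (h\<^sup>2 - 1) * (1 + m\<^sup>2) * m\<^sup>2" unfolding N_def g_def
    by (simp add: algebra_simps power2_eq_square)
  have a1: "\<bar>2*g*t*m\<bar> = 2*g*(\<bar>t\<bar>*\<bar>m\<bar>)" using g10 unfolding g_def by (simp add: abs_mult)
  have a2: "\<bar>(h\<^sup>2 - 1) * (1 + m\<^sup>2) * m\<^sup>2\<bar> = \<bar>h\<^sup>2 - 1\<bar> * (1 + m\<^sup>2) * m\<^sup>2"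
    by (simp add: abs_mult)
  have b1: "2*g*(\<bar>t\<bar>*\<bar>m\<bar>) \<le> 2*((1+h\<^sup>2)*(1+R))*R"
  proof -
    have "0 \<le> (1+h\<^sup>2)*(1+R)" using R0 by (simp add: add_nonneg_nonneg)
    then show ?thesis using g1 g10 tm R0 unfolding g_def by (intro mult_mono mult_left_mono) auto
  qed
  have b2: "\<bar>h\<^sup>2 - 1\<bar> * (1 + m\<^sup>2) * m\<^sup>2 \<le> \<bar>h\<^sup>2 - 1\<bar> * (1 + R) * R"
  proof -
    have "\<bar>h\<^sup>2 - 1\<bar> * (1 + m\<^sup>2) \<le> \<bar>h\<^sup>2 - 1\<bar> * (1 + R)"
      unfolding R_def by (intro mult_left_mono) auto
    moreover have "m\<^sup>2 \<le> R" unfolding R_def by simp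
    moreover have "0 \<le> \<bar>h\<^sup>2 - 1\<bar> * (1 + R)" using R0 by simp
    ultimately show ?thesis by (intro mult_mono) auto
  qed
  have "\<bar>N*m\<bar> \<le> 2*((1+h\<^sup>2)*(1+R))*R + \<bar>h\<^sup>2 - 1\<bar> * (1 + R) * R"
    unfolding Nm using a1 a2 b1 b2 abs_triangle_ineq[of "2*g*t*m" "(h\<^sup>2 - 1) * (1 + m\<^sup>2) * m\<^sup>2"]
    by linarith
  also have "\<dots> = B * ((1+R)*R)" unfolding B_def by (simp add: algebra_simps)
  also have "\<dots> \<le> B * D"
  proof -
    have f1: "(1+R)*R \<le> (1+R)*(h\<^sup>2+R)" using R0 by (intro mult_left_mono) auto
    have f2: "B \<ge> 0" unfolding B_def by simp
    show ?thesis unfolding D_def by (rule mult_left_mono[OF f1 f2])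
  qed
  finally have "\<bar>N*m\<bar> \<le> B*D" .
  then have q: "\<bar>N*m\<bar> / D \<le> B" using Dp by (simp only: pos_divide_le_eq mult.commute)
  have KN: "Kfun h t m = N/D" by (simp only: Kfun_def N_def D_def R_def)
  have "\<bar>Kfun h t m * m\<bar> = \<bar>N*m\<bar> / D" unfolding KN using Dp by (simp add: abs_mult)
  then show ?thesis using q unfolding B_def by simp
qed


lemma barrier:
  fixes f f' :: "real \<Rightarrow> real"
  assumes d: "\<And>s. s \<ge> a \<Longrightarrow> (f has_real_derivative f' s) (at s)"
    and fa: "f a > L" and cr: "\<And>s. s \<ge> a \<Longrightarrow> f s = L \<Longrightarrow> f' s > 0" and b: "b \<ge> a"
  shows "f b > L"
proof (rule ccontr)
  assume "\<not> f b > L"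
  then have fb: "f b \<le> L" by simp
  have ab: "a < b" using fa fb b by (cases "a = b") auto
  have ic: "\<And>x. a \<le> x \<Longrightarrow> isCont f x" using d by (blast intro: DERIV_isCont)
  have cont: "continuous_on {a..b} f" using ic by (intro continuous_at_imp_continuous_on) auto
  define S where "S = {a..b} \<inter> f -` {..L}"
  have Scl: "closed S" unfolding S_def by (intro continuous_closed_preimage cont) auto
  have bS: "b \<in> S" unfolding S_def using fb ab by auto
  have bdd: "bdd_below S" unfolding S_def by (rule bdd_belowI[of _ a]) auto
  define t where "t = Inf S"
  have tS: "t \<in> S" unfolding t_def using closed_contains_Inf[of S] Scl bS bdd by auto
  have tlow: "\<And>x. x \<in> S \<Longrightarrow> t \<le> x" unfolding t_def using bdd by (simp add: cInf_lower)
  from tS have ta: "a \<le> t" "t \<le> b" "f t \<le> L" unfolding S_def by auto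
  obtain x where x: "a \<le> x" "x \<le> t" "f x = L"
    using IVT2[of f t L a] ta fa ic by force
  then have "x \<in> S" unfolding S_def using ta by auto
  then have "t \<le> x" by (rule tlow)
  with x have xt: "x = t" by simp
  with x have ftL: "f t = L" by simp
  have at: "a < t" using fa ftL ta(1) by (cases "a = t") auto
  have "f' t > 0" using cr ta ftL by simp
  then obtain e where e: "e > 0" "\<And>k. k > 0 \<Longrightarrow> k < e \<Longrightarrow> f (t - k) < f t"
    using DERIV_pos_inc_left[OF d[OF ta(1)]] by blast
  define k where "k = min (e/2) ((t-a)/2)"
  have k: "k > 0" "k < e" "k \<le> (t-a)/2" using e at unfolding k_def by (auto simp: min_def)
  have "f (t - k) < L" using e(2)[OF k(1) k(2)] ftL by simp
  then have "t - k \<in> S" unfolding S_def using k ta by auto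
  then have "t \<le> t - k" by (rule tlow)
  then show False using k by simp
qed

lemma deriv_lb:
  fixes f f' :: "real \<Rightarrow> real"
  assumes ab: "a \<le> b" and d: "\<And>s. a \<le> s \<Longrightarrow> s \<le> b \<Longrightarrow> (f has_real_derivative f' s) (at s)"
    and c: "\<And>s. a \<le> s \<Longrightarrow> s \<le> b \<Longrightarrow> f' s \<ge> c"
  shows "f b - f a \<ge> c*(b-a)"
proof -
  define g where "g = (\<lambda>s. f s - c * s)"
  have "g a \<le> g b"
  proof (rule DERIV_nonneg_imp_nondecreasing[OF ab])
    fix x assume x: "a \<le> x" "x \<le> b"
    have "(g has_real_derivative (f' x - c*1)) (at x)"
      unfolding g_def by (intro DERIV_diff d[OF x] DERIV_cmult DERIV_ident)
    then show "\<exists>y. (g has_real_derivative y) (at x) \<and> y \<ge> 0"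
      using c[OF x] by force
  qed
  then show ?thesis unfolding g_def by (simp add: algebra_simps)
qed

lemma deriv_ub:
  fixes f f' :: "real \<Rightarrow> real"
  assumes ab: "a \<le> b" and d: "\<And>s. a \<le> s \<Longrightarrow> s \<le> b \<Longrightarrow> (f has_real_derivative f' s) (at s)"
    and c: "\<And>s. a \<le> s \<Longrightarrow> s \<le> b \<Longrightarrow> f' s \<le> c"
  shows "f b - f a \<le> c*(b-a)"
proof -
  have "(-c)*(b-a) \<le> (\<lambda>s. - f s) b - (\<lambda>s. - f s) a"
    by (rule deriv_lb[OF ab, of _ "\<lambda>s. - f' s"]) (use d c in \<open>auto intro: DERIV_minus\<close>)
  then show ?thesis by simp
qed



lemma forward:
  fixes h :: real and \<tau> \<mu> :: "real \<Rightarrow> real"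
  assumes h: "h > 0"
    and dt: "\<And>s. (\<tau> has_real_derivative (1 + Kfun h (\<tau> s) (\<mu> s) * \<mu> s)) (at s)"
    and dm: "\<And>s. (\<mu> has_real_derivative (- Kfun h (\<tau> s) (\<mu> s) * \<tau> s)) (at s)"
  shows "filterlim \<tau> at_top at_top \<and> filterlim \<mu> at_bot at_top"
proof -
  define K where "K s = Kfun h (\<tau> s) (\<mu> s)" for s
  define \<rho> where "\<rho> s = (\<tau> s)\<^sup>2 + (\<mu> s)\<^sup>2" for s
  define \<delta> where "\<delta> = h\<^sup>2/(2*(1+h\<^sup>2))"
  define c where "c = h\<^sup>2/(4*(1+h\<^sup>2))"
  have hp: "h\<^sup>2 > 0" using h by simp
  have nz: "1 + h\<^sup>2 > 0" by (simp add: add_pos_nonneg)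
  have \<delta>0: "\<delta> > 0" unfolding \<delta>_def using hp nz by simp
  have c0: "c > 0" unfolding c_def using hp nz by simp
  have dt': "\<And>s. (\<tau> has_real_derivative (1 + K s * \<mu> s)) (at s)" unfolding K_def by (rule dt)
  have dm': "\<And>s. (\<mu> has_real_derivative (- K s * \<tau> s)) (at s)" unfolding K_def by (rule dm)
  have band: "\<And>s. \<bar>\<tau> s\<bar> \<le> \<delta> \<Longrightarrow> 1 + K s * \<mu> s \<ge> c"
    unfolding K_def \<delta>_def c_def using KA[OF h] by blast
  have drho: "\<And>s. (\<rho> has_real_derivative (2 * \<tau> s)) (at s)"
  proof -
    fix s
    have "((\<lambda>s. (\<tau> s)\<^sup>2 + (\<mu> s)\<^sup>2) has_real_derivative
        (of_nat 2 * ((1 + K s * \<mu> s) * (\<tau> s)^(2 - Suc 0)) + of_nat 2 * ((- K s * \<tau> s) * (\<mu> s)^(2 - Suc 0)))) (at s)"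
      by (intro DERIV_add DERIV_power dt' dm')
    moreover have "of_nat 2 * ((1 + K s * \<mu> s) * (\<tau> s)^(2 - Suc 0)) + of_nat 2 * ((- K s * \<tau> s) * (\<mu> s)^(2 - Suc 0)) = 2 * \<tau> s"
      by (simp add: algebra_simps)
    ultimately show "(\<rho> has_real_derivative (2 * \<tau> s)) (at s)" unfolding \<rho>_def by simp
  qed
  have rho0: "\<And>s. \<rho> s \<ge> 0" unfolding \<rho>_def by simp
  obtain s0 where s0: "\<tau> s0 > -\<delta>"
  proof (rule ccontr)
    assume "\<not> thesis"
    then have neg: "\<And>s. \<tau> s \<le> -\<delta>" using that by (metis not_less)
    define b where "b = \<rho> 0 / \<delta> + 1"
    have b0: "b \<ge> 0" unfolding b_def using rho0[of 0] \<delta>0 by simp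
    have "\<rho> b - \<rho> 0 \<le> (-2*\<delta>)*(b-0)"
      by (rule deriv_ub[OF b0 drho]) (use neg in auto)
    moreover have "\<delta> * b = \<rho> 0 + \<delta>" unfolding b_def using \<delta>0 by (simp add: field_simps)
    moreover have "(-2*\<delta>)*(b-0) = -2*(\<delta>*b)" by simp
    ultimately have "\<rho> b < 0" using \<delta>0 rho0[of 0] by linarith
    then show False using rho0[of b] by simp
  qed
  have above0: "\<And>s. s \<ge> s0 \<Longrightarrow> \<tau> s > -\<delta>"
  proof -
    fix s assume "s \<ge> s0"
    show "\<tau> s > -\<delta>"
    proof (rule barrier[OF dt' s0 _ \<open>s \<ge> s0\<close>])
      fix u assume "\<tau> u = -\<delta>"
      then have "\<bar>\<tau> u\<bar> \<le> \<delta>" using \<delta>0 by simp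
      then show "1 + K u * \<mu> u > 0" using band c0 by force
    qed
  qed
  obtain s1 where s1: "s1 \<ge> s0" "\<tau> s1 > \<delta>"
  proof (rule ccontr)
    assume "\<not> thesis"
    then have le: "\<And>s. s \<ge> s0 \<Longrightarrow> \<tau> s \<le> \<delta>" using that by (metis not_less)
    define T where "T = 2*\<delta>/c"
    have T0: "T \<ge> 0" unfolding T_def using \<delta>0 c0 by simp
    have "\<tau> (s0+T) - \<tau> s0 \<ge> c*((s0+T)-s0)"
    proof (rule deriv_lb[OF _ dt'])
      show "s0 \<le> s0 + T" using T0 by simp
      fix u assume "s0 \<le> u"
      then have "\<bar>\<tau> u\<bar> \<le> \<delta>" using le above0 by force
      then show "c \<le> 1 + K u * \<mu> u" by (rule band)
    qed
    moreover have "c * T = 2*\<delta>" unfolding T_def using c0 by simp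
    ultimately have "\<tau> (s0+T) > \<delta>" using s0 by simp
    then show False using le[of "s0+T"] T0 by simp
  qed
  have above: "\<And>s. s \<ge> s1 \<Longrightarrow> \<tau> s > \<delta>"
  proof -
    fix s assume "s \<ge> s1"
    show "\<tau> s > \<delta>"
    proof (rule barrier[OF dt' s1(2) _ \<open>s \<ge> s1\<close>])
      fix u assume "\<tau> u = \<delta>"
      then have "\<bar>\<tau> u\<bar> \<le> \<delta>" using \<delta>0 by simp
      then show "1 + K u * \<mu> u > 0" using band c0 by force
    qed
  qed
  have tpos: "\<And>s. s \<ge> s1 \<Longrightarrow> \<tau> s > 0" using above \<delta>0 by force
  have rho_grow: "\<And>s. s \<ge> s1 \<Longrightarrow> \<rho> s \<ge> 2*\<delta>*(s - s1)"
  proof -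
    fix s assume s: "s \<ge> s1"
    have "\<rho> s - \<rho> s1 \<ge> (2*\<delta>)*(s-s1)"
      by (rule deriv_lb[OF s drho]) (use above in force)
    then show "\<rho> s \<ge> 2*\<delta>*(s - s1)" using rho0[of s1] by simp
  qed
  define v where "v s = \<mu> s / \<tau> s" for s
  define E where "E s = K s * \<rho> s + \<mu> s" for s
  have dv: "\<And>s. s \<ge> s1 \<Longrightarrow> (v has_real_derivative (- E s / (\<tau> s)\<^sup>2)) (at s)"
  proof -
    fix s assume s: "s \<ge> s1"
    have t0: "\<tau> s \<noteq> 0" using tpos[OF s] by simp
    have "((\<lambda>s. \<mu> s / \<tau> s) has_real_derivative
      ((- K s * \<tau> s) * \<tau> s - \<mu> s * (1 + K s * \<mu> s)) / (\<tau> s * \<tau> s)) (at s)"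
      by (rule DERIV_divide[OF dm' dt' t0])
    moreover have "(- K s * \<tau> s) * \<tau> s - \<mu> s * (1 + K s * \<mu> s) = - E s"
      unfolding E_def \<rho>_def by (simp add: power2_eq_square algebra_simps)
    ultimately show "(v has_real_derivative (- E s / (\<tau> s)\<^sup>2)) (at s)"
      unfolding v_def by (simp add: power2_eq_square)
  qed
  have muv: "\<And>s. s \<ge> s1 \<Longrightarrow> \<mu> s = v s * \<tau> s" unfolding v_def using tpos by force
  define Vp where "Vp = max (v s1) 0 + 1"
  define Vm where "Vm = min (v s1) (-2) - 1"
  have Vp1: "Vp \<ge> 1" unfolding Vp_def by simp
  have Vm2: "Vm < -2" unfolding Vm_def by simp
  have vup: "\<And>s. s \<ge> s1 \<Longrightarrow> v s < Vp"
  proof -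
    fix s assume s: "s \<ge> s1"
    have dnv: "\<And>u. u \<ge> s1 \<Longrightarrow> ((\<lambda>s. - v s) has_real_derivative (- (- E u / (\<tau> u)\<^sup>2))) (at u)"
      by (intro DERIV_minus dv)
    have "- v s > - Vp"
    proof (rule barrier[OF dnv _ _ s])
      show "- v s1 > - Vp" unfolding Vp_def by simp
      fix u assume u: "u \<ge> s1" and eq: "- v u = - Vp"
      have tu: "\<tau> u > 0" using tpos[OF u] .
      have "\<mu> u = Vp * \<tau> u" using muv[OF u] eq by simp
      then have mu: "\<mu> u > 0" using Vp1 tu by simp
      have "E u > 0" unfolding E_def K_def \<rho>_def using KB[OF h tu mu] .
      then show "- (- E u / (\<tau> u)\<^sup>2) > 0" using tu by simp
    qed
    then show "v s < Vp" by simp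
  qed
  have vlo: "\<And>s. s \<ge> s1 \<Longrightarrow> v s > Vm"
  proof -
    fix s assume s: "s \<ge> s1"
    show "v s > Vm"
    proof (rule barrier[OF dv _ _ s])
      show "v s1 > Vm" unfolding Vm_def by simp
      fix u assume u: "u \<ge> s1" and eq: "v u = Vm"
      have tu: "\<tau> u > 0" using tpos[OF u] .
      have "\<mu> u = Vm * \<tau> u" using muv[OF u] eq by simp
      moreover have "Vm * \<tau> u < -2 * \<tau> u" using mult_strict_right_mono[OF Vm2 tu] by simp
      ultimately have mu: "\<mu> u < -2 * \<tau> u" by simp
      have "E u < 0" unfolding E_def K_def \<rho>_def using KC[OF h tu mu] .
      then show "- E u / (\<tau> u)\<^sup>2 > 0" using tu by (simp add: divide_neg_pos)
    qed
  qed
  define W where "W = max Vp (- Vm)"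
  have W1: "W \<ge> 1" unfolding W_def using Vp1 by simp
  have rho_le: "\<And>s. s \<ge> s1 \<Longrightarrow> \<rho> s \<le> (1 + W\<^sup>2) * (\<tau> s)\<^sup>2"
  proof -
    fix s assume s: "s \<ge> s1"
    have "\<bar>v s\<bar> \<le> W" using vup[OF s] vlo[OF s] unfolding W_def by auto
    then have "(v s)\<^sup>2 \<le> W\<^sup>2" using power_mono[of "\<bar>v s\<bar>" W 2] by simp
    then have "(v s)\<^sup>2 * (\<tau> s)\<^sup>2 \<le> W\<^sup>2 * (\<tau> s)\<^sup>2" by (rule mult_right_mono) simp
    then show "\<rho> s \<le> (1 + W\<^sup>2) * (\<tau> s)\<^sup>2" unfolding \<rho>_def muv[OF s]
      by (simp add: power_mult_distrib algebra_simps)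
  qed
  have tlim: "filterlim \<tau> at_top at_top"
    unfolding filterlim_at_top
  proof
    fix Z :: real
    show "eventually (\<lambda>s. Z \<le> \<tau> s) at_top"
      unfolding eventually_at_top_linorder
    proof (intro exI allI impI)
      fix s assume s: "s \<ge> s1 + Z\<^sup>2 * (1 + W\<^sup>2) / (2*\<delta>)"
      have W0: "1 + W\<^sup>2 > 0" by (simp add: add_pos_nonneg)
      have ss1: "s \<ge> s1" using s W0 \<delta>0 by (smt (verit) divide_nonneg_pos mult_nonneg_nonneg zero_le_power2)
      have "2*\<delta>*(s - s1) \<ge> 2*\<delta>*(Z\<^sup>2 * (1 + W\<^sup>2) / (2*\<delta>))"
        using s \<delta>0 by (intro mult_left_mono) auto
      also have "2*\<delta>*(Z\<^sup>2 * (1 + W\<^sup>2) / (2*\<delta>)) = Z\<^sup>2 * (1 + W\<^sup>2)" using \<delta>0 by simp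
      finally have "Z\<^sup>2 * (1 + W\<^sup>2) \<le> (1 + W\<^sup>2) * (\<tau> s)\<^sup>2"
        using rho_grow[OF ss1] rho_le[OF ss1] by linarith
      then have "Z\<^sup>2 \<le> (\<tau> s)\<^sup>2" using W0 by (simp add: mult.commute)
      then have "\<bar>Z\<bar> \<le> \<tau> s" using tpos[OF ss1] power2_le_imp_le[of "\<bar>Z\<bar>" "\<tau> s"] by simp
      then show "Z \<le> \<tau> s" by simp
    qed
  qed
  define T0 where "T0 = 1 + 2*h\<^sup>2"
  obtain N where N: "\<And>s. s \<ge> N \<Longrightarrow> T0 \<le> \<tau> s"
    using tlim unfolding filterlim_at_top eventually_at_top_linorder by blast
  define s2 where "s2 = max N s1"
  have s21: "s2 \<ge> s1" unfolding s2_def by simp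
  have t1: "\<And>s. s \<ge> s2 \<Longrightarrow> \<tau> s \<ge> 1"
  proof -
    fix s assume "s \<ge> s2"
    then have "T0 \<le> \<tau> s" using N unfolding s2_def by simp
    moreover have "T0 \<ge> 1" unfolding T0_def by simp
    ultimately show "\<tau> s \<ge> 1" by simp
  qed
  have t4: "\<And>s. s \<ge> s2 \<Longrightarrow> (\<tau> s)^4 \<ge> 2*h\<^sup>2"
  proof -
    fix s assume s: "s \<ge> s2"
    have "T0 \<le> \<tau> s" using N s unfolding s2_def by simp
    moreover have "(\<tau> s)^1 \<le> (\<tau> s)^4" by (rule power_increasing) (use t1[OF s] in auto)
    ultimately show "(\<tau> s)^4 \<ge> 2*h\<^sup>2" unfolding T0_def by simp
  qed
  define \<alpha> where "\<alpha> = 1/(4*(1+h\<^sup>2)*(1+Vp\<^sup>2)\<^sup>2)"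
  define B0 where "B0 = 2 + 2*h\<^sup>2 + \<bar>h\<^sup>2 - 1\<bar>"
  define \<beta> where "\<beta> = \<alpha>/(1+B0)"
  have \<alpha>0: "\<alpha> > 0"
  proof -
    have "1 + Vp\<^sup>2 > 0" by (simp add: add_pos_nonneg)
    then have "4*(1+h\<^sup>2)*(1+Vp\<^sup>2)\<^sup>2 > 0" using nz by simp
    then show ?thesis unfolding \<alpha>_def by simp
  qed
  have B00: "1 + B0 > 0" unfolding B0_def by (simp add: add_pos_nonneg)
  have \<beta>0: "\<beta> > 0" unfolding \<beta>_def using \<alpha>0 B00 by simp
  have \<beta>B: "\<beta> * (1 + B0) = \<alpha>" unfolding \<beta>_def using B00 by simp
  have KDs: "\<And>s. s \<ge> s2 \<Longrightarrow> v s \<ge> -1 \<Longrightarrow> E s \<ge> \<alpha> * \<tau> s"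
  proof -
    fix s assume s: "s \<ge> s2" and vs: "v s \<ge> -1"
    have ss1: "s \<ge> s1" using s s21 by simp
    have tp: "\<tau> s > 0" using tpos[OF ss1] .
    have m1: "- \<tau> s \<le> \<mu> s" using muv[OF ss1] mult_right_mono[OF vs, of "\<tau> s"] tp by simp
    have m2: "\<mu> s \<le> Vp * \<tau> s" using muv[OF ss1] mult_right_mono[of "v s" Vp "\<tau> s"] vup[OF ss1] tp by simp
    have "E s \<ge> \<tau> s / (4*(1+h\<^sup>2)*(1+Vp\<^sup>2)\<^sup>2)"
      unfolding E_def K_def \<rho>_def using KD[OF h Vp1 t1[OF s] t4[OF s] m1 m2] .
    then show "E s \<ge> \<alpha> * \<tau> s" unfolding \<alpha>_def by simp
  qed
  obtain s3 where s3: "s3 \<ge> s2" "v s3 < -1"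
  proof (rule ccontr)
    assume "\<not> thesis"
    then have vge: "\<And>s. s \<ge> s2 \<Longrightarrow> v s \<ge> -1" using that by (metis not_less)
    define \<Phi> where "\<Phi> s = v s + \<beta> * ln (\<tau> s)" for s
    have dPhi: "\<And>s. s \<ge> s2 \<Longrightarrow> (\<Phi> has_real_derivative
        (- E s / (\<tau> s)\<^sup>2 + \<beta> * (1 / \<tau> s * (1 + K s * \<mu> s)))) (at s)"
    proof -
      fix s assume s: "s \<ge> s2"
      have ss1: "s \<ge> s1" using s s21 by simp
      have "((\<lambda>x. ln (\<tau> x)) has_real_derivative (1 / \<tau> s * (1 + K s * \<mu> s))) (at s)"
        by (rule DERIV_chain2[OF DERIV_ln_divide[OF tpos[OF ss1]] dt'])
      then show "(\<Phi> has_real_derivative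
        (- E s / (\<tau> s)\<^sup>2 + \<beta> * (1 / \<tau> s * (1 + K s * \<mu> s)))) (at s)"
        unfolding \<Phi>_def by (intro DERIV_add dv[OF ss1] DERIV_cmult)
    qed
    have dPhi_le: "\<And>s. s \<ge> s2 \<Longrightarrow> - E s / (\<tau> s)\<^sup>2 + \<beta> * (1 / \<tau> s * (1 + K s * \<mu> s)) \<le> 0"
    proof -
      fix s assume s: "s \<ge> s2"
      have ss1: "s \<ge> s1" using s s21 by simp
      define y where "y = \<tau> s"
      have y0: "y > 0" unfolding y_def using tpos[OF ss1] .
      have "K s * \<mu> s \<le> B0" unfolding K_def B0_def using KE[OF h, of "\<tau> s" "\<mu> s"] by simp
      then have "\<beta> * (1 + K s * \<mu> s) \<le> \<beta> * (1 + B0)" using \<beta>0 by (intro mult_left_mono) auto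
      then have bk: "\<beta> * (1 + K s * \<mu> s) \<le> \<alpha>" using \<beta>B by simp
      have Ey: "E s \<ge> \<alpha> * y" unfolding y_def using KDs[OF s vge[OF s]] .
      have eq: "- E s / y\<^sup>2 + \<beta> * (1 / y * (1 + K s * \<mu> s)) = (- E s + y * (\<beta> * (1 + K s * \<mu> s))) / y\<^sup>2"
        using y0 by (simp add: field_simps power2_eq_square)
      have "y * (\<beta> * (1 + K s * \<mu> s)) \<le> y * \<alpha>" using bk y0 by (intro mult_left_mono) auto
      then have "- E s + y * (\<beta> * (1 + K s * \<mu> s)) \<le> 0" using Ey by (simp add: mult.commute)
      then have "(- E s + y * (\<beta> * (1 + K s * \<mu> s))) / y\<^sup>2 \<le> 0" using y0 by (simp add: divide_nonpos_pos)
      then show "- E s / (\<tau> s)\<^sup>2 + \<beta> * (1 / \<tau> s * (1 + K s * \<mu> s)) \<le> 0" using eq unfolding y_def by simp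
    qed
    have Phi_le: "\<And>s. s \<ge> s2 \<Longrightarrow> \<Phi> s \<le> \<Phi> s2"
    proof -
      fix s assume s: "s \<ge> s2"
      show "\<Phi> s \<le> \<Phi> s2"
        by (rule DERIV_nonpos_imp_nonincreasing[OF s]) (use dPhi dPhi_le in force)
    qed
    define Z where "Z = exp ((\<Phi> s2 + 2) / \<beta>)"
    obtain N2 where N2: "\<And>s. s \<ge> N2 \<Longrightarrow> Z \<le> \<tau> s"
      using tlim unfolding filterlim_at_top eventually_at_top_linorder by blast
    define s where "s = max N2 s2"
    have ss2: "s \<ge> s2" unfolding s_def by simp
    have Zs: "Z \<le> \<tau> s" using N2 unfolding s_def by simp
    have Z0: "Z > 0" unfolding Z_def by simp
    have "ln Z \<le> ln (\<tau> s)" using Zs Z0 by simp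
    then have "(\<Phi> s2 + 2) / \<beta> \<le> ln (\<tau> s)" unfolding Z_def by simp
    then have "\<Phi> s2 + 2 \<le> \<beta> * ln (\<tau> s)" using \<beta>0 by (simp add: pos_divide_le_eq mult.commute)
    moreover have "\<Phi> s \<le> \<Phi> s2" by (rule Phi_le[OF ss2])
    ultimately have "v s \<le> -2" unfolding \<Phi>_def by simp
    then show False using vge[OF ss2] by simp
  qed
  have vneg: "\<And>s. s \<ge> s3 \<Longrightarrow> v s < -1"
  proof -
    fix s assume s: "s \<ge> s3"
    have dnv: "\<And>u. u \<ge> s3 \<Longrightarrow> ((\<lambda>s. - v s) has_real_derivative (- (- E u / (\<tau> u)\<^sup>2))) (at u)"
      using s3(1) s21 by (intro DERIV_minus dv) simp
    have "- v s > 1"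
    proof (rule barrier[OF dnv _ _ s])
      show "- v s3 > 1" using s3 by simp
      fix u assume u: "u \<ge> s3" and eq: "- v u = 1"
      have us2: "u \<ge> s2" using u s3 by simp
      have tu: "\<tau> u > 0" using tpos us2 s21 by simp
      have "E u \<ge> \<alpha> * \<tau> u" using KDs[OF us2] eq by simp
      moreover have "\<alpha> * \<tau> u > 0" using \<alpha>0 tu by simp
      ultimately have "E u > 0" by simp
      then show "- (- E u / (\<tau> u)\<^sup>2) > 0" using tu by simp
    qed
    then show "v s < -1" by simp
  qed
  have mlim: "filterlim \<mu> at_bot at_top"
    unfolding filterlim_at_bot
  proof
    fix Z :: real
    obtain N3 where N3: "\<And>s. s \<ge> N3 \<Longrightarrow> - Z \<le> \<tau> s"
      using tlim unfolding filterlim_at_top eventually_at_top_linorder by blast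
    show "eventually (\<lambda>s. \<mu> s \<le> Z) at_top"
      unfolding eventually_at_top_linorder
    proof (intro exI allI impI)
      fix s assume s: "s \<ge> max N3 s3"
      have ss1: "s \<ge> s1" using s s3 s21 by simp
      have "v s < -1" using vneg s by simp
      then have "v s * \<tau> s < -1 * \<tau> s" using tpos[OF ss1] by (intro mult_strict_right_mono)
      then have "\<mu> s < - \<tau> s" using muv[OF ss1] by simp
      then show "\<mu> s \<le> Z" using N3 s by force
    qed
  qed
  show ?thesis using tlim mlim by simp
qed



lemma Kodd: "Kfun h (-t) (-m) = - Kfun h t m"
  unfolding Kfun_def by (simp add: algebra_simps minus_divide_left)

theorem claim6:
  fixes h :: real and \<tau> \<mu> :: "real \<Rightarrow> real"
  assumes "h > 0"
    and "\<And>s. (\<tau> has_real_derivative (1 + Kfun h (\<tau> s) (\<mu> s) * \<mu> s)) (at s)"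
    and "\<And>s. (\<mu> has_real_derivative (- Kfun h (\<tau> s) (\<mu> s) * \<tau> s)) (at s)"
  shows "filterlim \<tau> at_top at_top \<and> filterlim \<tau> at_bot at_bot
       \<and> filterlim \<mu> at_bot at_top \<and> filterlim \<mu> at_top at_bot"
proof -
  note h = assms(1) and dt = assms(2) and dm = assms(3)
  define \<sigma> where "\<sigma> s = - \<tau> (- s)" for s
  define \<nu> where "\<nu> s = - \<mu> (- s)" for s
  have ds: "\<And>s. (\<sigma> has_real_derivative (1 + Kfun h (\<sigma> s) (\<nu> s) * \<nu> s)) (at s)"
  proof -
    fix s
    have "((\<lambda>x. \<tau> (- x)) has_real_derivative - (1 + Kfun h (\<tau> (-s)) (\<mu> (-s)) * \<mu> (-s))) (at s)"
      using dt[of "-s"] DERIV_mirror by blast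
    then have "((\<lambda>x. - \<tau> (- x)) has_real_derivative - (- (1 + Kfun h (\<tau> (-s)) (\<mu> (-s)) * \<mu> (-s)))) (at s)"
      by (rule DERIV_minus)
    moreover have "Kfun h (\<sigma> s) (\<nu> s) = - Kfun h (\<tau> (-s)) (\<mu> (-s))"
      unfolding \<sigma>_def \<nu>_def by (rule Kodd)
    ultimately show "(\<sigma> has_real_derivative (1 + Kfun h (\<sigma> s) (\<nu> s) * \<nu> s)) (at s)"
      unfolding \<sigma>_def[abs_def] by (simp add: \<nu>_def algebra_simps)
  qed
  have dn: "\<And>s. (\<nu> has_real_derivative (- Kfun h (\<sigma> s) (\<nu> s) * \<sigma> s)) (at s)"
  proof -
    fix s
    have "((\<lambda>x. \<mu> (- x)) has_real_derivative - (- Kfun h (\<tau> (-s)) (\<mu> (-s)) * \<tau> (-s))) (at s)"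
      using dm[of "-s"] DERIV_mirror by blast
    then have "((\<lambda>x. - \<mu> (- x)) has_real_derivative - (- (- Kfun h (\<tau> (-s)) (\<mu> (-s)) * \<tau> (-s)))) (at s)"
      by (rule DERIV_minus)
    moreover have "Kfun h (\<sigma> s) (\<nu> s) = - Kfun h (\<tau> (-s)) (\<mu> (-s))"
      unfolding \<sigma>_def \<nu>_def by (rule Kodd)
    ultimately show "(\<nu> has_real_derivative (- Kfun h (\<sigma> s) (\<nu> s) * \<sigma> s)) (at s)"
      unfolding \<nu>_def[abs_def] by (simp add: \<sigma>_def)
  qed
  have F: "filterlim \<tau> at_top at_top \<and> filterlim \<mu> at_bot at_top" by (rule forward[OF h dt dm])
  have G: "filterlim \<sigma> at_top at_top \<and> filterlim \<nu> at_bot at_top" by (rule forward[OF h ds dn])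
  have "filterlim (\<lambda>x. - \<sigma> x) at_bot at_top" using G filterlim_uminus_at_top by blast
  then have "filterlim (\<lambda>x. \<tau> (- x)) at_bot at_top" unfolding \<sigma>_def by simp
  then have T: "filterlim \<tau> at_bot at_bot" using filterlim_at_bot_mirror by blast
  have "filterlim (\<lambda>x. - \<nu> x) at_top at_top" using G filterlim_uminus_at_bot by blast
  then have "filterlim (\<lambda>x. \<mu> (- x)) at_top at_top" unfolding \<nu>_def by simp
  then have M: "filterlim \<mu> at_top at_bot" using filterlim_at_bot_mirror by blast
  show ?thesis using F T M by simp
qed


end
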